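(* Let $f=\frac1n\sum_{i=1}^n f_i$ where each $f_i:\mathbb{R}^d\to\mathbb{R}$ is $L$-smooth, and assume moreover that either each $f_i$ is $\mu$-strongly convex for some $\mu>0$, or $\inf_x f(x)>-\infty$. Let the stepsize satisfy $\gamma\le\frac1{3L}$. Then the iterates of No Full Grad SARAH (described in the context) satisfy, for every epoch $s\ge1$, $$\Big\|\nabla f(x_s^0)-\frac1{n+1}\sum_{t=0}^{n}v_s^t\Big\|^2\le 9\gamma^2L^2\|v_s\|^2+36\gamma^2L^2n^2\|v_{s-1}\|^2.$$
   Context: No Full Grad SARAH: input $x_0^0\in\mathbb{R}^d$, $v_0=0$, stepsize $\gamma>0$. For epochs $s=0,1,\dots$: choose a permutation $\pi_s^1,\dots,\pi_s^n$ of $\{1,\dots,n\}$ (by any shuffling rule); set $\tilde v_s^1=0$, $v_s^0=v_s$, $x_s^1=x_s^0-\gamma v_s^0$; for $t=1,\dots,n$ set $\tilde v_s^{t+1}=\frac{t-1}{t}\tilde v_s^t+\frac1t\nabla f_{\pi_s^t}(x_s^t)$, $v_s^t=\frac1n\big(\nabla f_{\pi_s^t}(x_s^t)-\nabla f_{\pi_s^t}(x_s^{t-1})\big)+v_s^{t-1}$, $x_s^{t+1}=x_s^t-\gamma v_s^t$; then $x_{s+1}^0=x_s^{n+1}$, $v_{s+1}=\tilde v_s^{n+1}$. *)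

theory Defs
  imports "HOL-Analysis.Analysis"
begin

definition L_smooth :: "real \<Rightarrow> ('a::euclidean_space \<Rightarrow> real) \<Rightarrow> ('a \<Rightarrow> 'a) \<Rightarrow> bool" where
  "L_smooth L f g \<longleftrightarrow> (\<forall>x. GDERIV f x :> g x) \<and> (\<forall>x y. norm (g x - g y) \<le> L * norm (x - y))"

definition strongly_convex :: "real \<Rightarrow> ('a::euclidean_space \<Rightarrow> real) \<Rightarrow> bool" where
  "strongly_convex \<mu> f \<longleftrightarrow> convex_on UNIV (\<lambda>x. f x - \<mu> / 2 * (norm x)\<^sup>2)"

text \<open>Inner loop of No Full Grad SARAH in epoch with permutation pi (indices 1..n),
  start point x0 and initial direction v.
  inner_state ... t = (x^t, x^(t+1), v^t, tilde v^(t+1)) for t = 0..n.\<close>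
fun inner_state :: "(nat \<Rightarrow> 'a \<Rightarrow> 'a::euclidean_space) \<Rightarrow> nat \<Rightarrow> real \<Rightarrow> (nat \<Rightarrow> nat)
    \<Rightarrow> 'a \<Rightarrow> 'a \<Rightarrow> nat \<Rightarrow> 'a \<times> 'a \<times> 'a \<times> 'a" where
  "inner_state g n \<gamma> \<pi> x0 v 0 = (x0, x0 - \<gamma> *\<^sub>R v, v, 0)"
| "inner_state g n \<gamma> \<pi> x0 v (Suc t) =
     (case inner_state g n \<gamma> \<pi> x0 v t of (xp, xc, vv, tv) \<Rightarrow>
       let k = Suc t; i = \<pi> k;
           tv' = ((real k - 1) / real k) *\<^sub>R tv + (1 / real k) *\<^sub>R g i xc;
           v' = (1 / real n) *\<^sub>R (g i xc - g i xp) + vv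
       in (xc, xc - \<gamma> *\<^sub>R v', v', tv'))"

text \<open>Outer loop: sarah_epoch ... s = (x_s^0, v_s), with v_0 = 0.\<close>
fun sarah_epoch :: "(nat \<Rightarrow> 'a \<Rightarrow> 'a::euclidean_space) \<Rightarrow> nat \<Rightarrow> real \<Rightarrow> (nat \<Rightarrow> nat \<Rightarrow> nat)
    \<Rightarrow> 'a \<Rightarrow> nat \<Rightarrow> 'a \<times> 'a" where
  "sarah_epoch g n \<gamma> \<pi> x0 0 = (x0, 0)"
| "sarah_epoch g n \<gamma> \<pi> x0 (Suc s) =
     (case sarah_epoch g n \<gamma> \<pi> x0 s of (x, v) \<Rightarrow>
       (case inner_state g n \<gamma> (\<pi> s) x v n of (xp, xc, vv, tv) \<Rightarrow> (xc, tv)))"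

definition sarah_x0 where "sarah_x0 g n \<gamma> \<pi> x0 s = fst (sarah_epoch g n \<gamma> \<pi> x0 s)"
definition sarah_v where "sarah_v g n \<gamma> \<pi> x0 s = snd (sarah_epoch g n \<gamma> \<pi> x0 s)"
definition sarah_vt where
  "sarah_vt g n \<gamma> \<pi> x0 s t =
     fst (snd (snd (inner_state g n \<gamma> (\<pi> s) (sarah_x0 g n \<gamma> \<pi> x0 s) (sarah_v g n \<gamma> \<pi> x0 s) t)))"

end

theory Submission imports Defs begin

definition "Xs g n \<gamma> p x v t = fst (inner_state g n \<gamma> p x v t)"
definition "Xn g n \<gamma> p x v t = fst (snd (inner_state g n \<gamma> p x v t))"
definition "Vs g n \<gamma> p x v t = fst (snd (snd (inner_state g n \<gamma> p x v t)))"
definition "TVs g n \<gamma> p x v t = snd (snd (snd (inner_state g n \<gamma> p x v t)))"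

lemma st_eq: "inner_state g n \<gamma> p x v t = (Xs g n \<gamma> p x v t, Xn g n \<gamma> p x v t, Vs g n \<gamma> p x v t, TVs g n \<gamma> p x v t)"
  by (simp add: Xs_def Xn_def Vs_def TVs_def)

lemma st_Suc:
  "Xs g n \<gamma> p x v (Suc t) = Xn g n \<gamma> p x v t"
  "Vs g n \<gamma> p x v (Suc t) = (1 / real n) *\<^sub>R (g (p (Suc t)) (Xn g n \<gamma> p x v t) - g (p (Suc t)) (Xs g n \<gamma> p x v t)) + Vs g n \<gamma> p x v t"
  "Xn g n \<gamma> p x v (Suc t) = Xn g n \<gamma> p x v t - \<gamma> *\<^sub>R Vs g n \<gamma> p x v (Suc t)"
  "TVs g n \<gamma> p x v (Suc t) = ((real (Suc t) - 1) / real (Suc t)) *\<^sub>R TVs g n \<gamma> p x v t + (1 / real (Suc t)) *\<^sub>R g (p (Suc t)) (Xn g n \<gamma> p x v t)"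
  by (simp_all add: Xs_def Xn_def Vs_def TVs_def Let_def split: prod.split)

lemma st_0:
  "Xs g n \<gamma> p x v 0 = x" "Vs g n \<gamma> p x v 0 = v" "TVs g n \<gamma> p x v 0 = 0"
  "Xn g n \<gamma> p x v 0 = x - \<gamma> *\<^sub>R v"
  by (simp_all add: Xs_def Xn_def Vs_def TVs_def)

lemma Xn_eq: "Xn g n \<gamma> p x v t = Xs g n \<gamma> p x v t - \<gamma> *\<^sub>R Vs g n \<gamma> p x v t"
  by (cases t) (simp_all add: st_0 st_Suc)

lemma X_Suc: "Xs g n \<gamma> p x v (Suc t) = Xs g n \<gamma> p x v t - \<gamma> *\<^sub>R Vs g n \<gamma> p x v t"
  by (simp add: st_Suc Xn_eq)

lemma V_Suc: "Vs g n \<gamma> p x v (Suc t) = (1 / real n) *\<^sub>R (g (p (Suc t)) (Xs g n \<gamma> p x v (Suc t)) - g (p (Suc t)) (Xs g n \<gamma> p x v t)) + Vs g n \<gamma> p x v t"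
  by (simp add: st_Suc)

lemma TV_eq: "TVs g n \<gamma> p x v t = (1 / real t) *\<^sub>R (\<Sum>k=1..t. g (p k) (Xs g n \<gamma> p x v k))"
proof (induction t)
  case 0 then show ?case by (simp add: st_0)
next
  case (Suc t)
  have "TVs g n \<gamma> p x v (Suc t) = ((real t) / real (Suc t)) *\<^sub>R TVs g n \<gamma> p x v t + (1 / real (Suc t)) *\<^sub>R g (p (Suc t)) (Xs g n \<gamma> p x v (Suc t))"
    by (simp add: st_Suc)
  also have "\<dots> = (1 / real (Suc t)) *\<^sub>R (\<Sum>k=1..Suc t. g (p k) (Xs g n \<gamma> p x v k))"
    using Suc by (cases "t = 0") (simp_all add: scaleR_add_right)
  finally show ?case .
qed


context
  fixes g :: "nat \<Rightarrow> 'a::euclidean_space \<Rightarrow> 'a" and n :: nat and \<gamma> L :: real and p :: "nat \<Rightarrow> nat" and x v :: 'a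
  assumes n1: "n \<ge> 1" and Lp: "L > 0" and gp: "\<gamma> > 0" and gL: "\<gamma> * L \<le> 1/3"
    and lip: "\<And>k a b. k \<in> {1..n} \<Longrightarrow> norm (g (p k) a - g (p k) b) \<le> L * norm (a - b)"
begin

abbreviation "X \<equiv> Xs g n \<gamma> p x v"
abbreviation "V \<equiv> Vs g n \<gamma> p x v"

lemma V_dev: "t \<le> n \<Longrightarrow> norm (V t - v) \<le> \<gamma> * L / n * (\<Sum>k<t. norm (V k))"
proof (induction t)
  case 0 then show ?case by (simp add: st_0)
next
  case (Suc t)
  have "V (Suc t) - v = (1 / real n) *\<^sub>R (g (p (Suc t)) (X (Suc t)) - g (p (Suc t)) (X t)) + (V t - v)"
    by (simp add: V_Suc)
  also have "norm \<dots> \<le> (1 / real n) * norm (g (p (Suc t)) (X (Suc t)) - g (p (Suc t)) (X t)) + norm (V t - v)"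
    by (rule order_trans[OF norm_triangle_ineq]) simp
  also have "norm (g (p (Suc t)) (X (Suc t)) - g (p (Suc t)) (X t)) \<le> L * norm (X (Suc t) - X t)"
    using Suc.prems by (intro lip) auto
  also have "X (Suc t) - X t = - (\<gamma> *\<^sub>R V t)" by (simp add: X_Suc)
  also have "norm (V t - v) \<le> \<gamma> * L / n * (\<Sum>k<t. norm (V k))" using Suc by simp
  finally have "norm (V (Suc t) - v) \<le> (1 / real n) * (L * (\<gamma> * norm (V t))) + \<gamma> * L / n * (\<Sum>k<t. norm (V k))"
    using gp by (simp add: mult_left_mono divide_right_mono)
  moreover have "\<gamma> * L / n * (\<Sum>k<Suc t. norm (V k)) = (1 / real n) * (L * (\<gamma> * norm (V t))) + \<gamma> * L / n * (\<Sum>k<t. norm (V k))"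
    by (simp add: algebra_simps add_divide_distrib)
  ultimately show ?case by linarith
qed

lemma V_bound: "t \<le> n \<Longrightarrow> norm (V t) \<le> 3/2 * norm v"
proof (induction t rule: less_induct)
  case (less t)
  have s: "(\<Sum>k<t. norm (V k)) \<le> (\<Sum>k<t. 3/2 * norm v)"
    using less by (intro sum_mono) auto
  have "norm (V t) \<le> norm v + norm (V t - v)" by (metis norm_triangle_sub add.commute)
  also have "norm (V t - v) \<le> \<gamma> * L / n * (\<Sum>k<t. norm (V k))" using V_dev less by simp
  also have "\<dots> \<le> \<gamma> * L / n * (t * (3/2 * norm v))"
    using s gp Lp by (intro mult_left_mono) auto
  also have "\<dots> \<le> 1/3 * (3/2 * norm v)"
  proof -
    have "\<gamma> * L / n * t \<le> \<gamma> * L" using less.prems n1 gp Lp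
      by (simp add: field_simps mult_left_mono)
    also have "\<dots> \<le> 1/3" by (rule gL)
    finally have "\<gamma> * L / n * t * (3/2 * norm v) \<le> 1/3 * (3/2 * norm v)"
      by (rule mult_right_mono) simp
    then show ?thesis by (metis mult.assoc)
  qed
  finally show ?case by simp
qed

lemma V_dev2: "t \<le> n \<Longrightarrow> norm (V t - v) \<le> 3/2 * (\<gamma> * L) * norm v"
proof -
  assume t: "t \<le> n"
  have s: "(\<Sum>k<t. norm (V k)) \<le> (\<Sum>k<t. 3/2 * norm v)"
    using t V_bound by (intro sum_mono) auto
  have "norm (V t - v) \<le> \<gamma> * L / n * (\<Sum>k<t. norm (V k))" using V_dev t by simp
  also have "\<dots> \<le> \<gamma> * L / n * (t * (3/2 * norm v))"
    using s gp Lp by (intro mult_left_mono) auto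
  also have "\<dots> \<le> \<gamma> * L * (3/2 * norm v)"
  proof -
    have "\<gamma> * L / n * t \<le> \<gamma> * L" using t n1 gp Lp
      by (simp add: field_simps mult_left_mono)
    then show ?thesis by (metis mult.assoc mult_right_mono norm_ge_zero zero_le_divide_iff zero_le_mult_iff zero_le_numeral divide_nonneg_nonneg)
  qed
  finally show ?thesis by simp
qed

lemma X_dev: "k + d \<le> n + 1 \<Longrightarrow> norm (X (k + d) - X k) \<le> \<gamma> * d * (3/2 * norm v)"
proof (induction d)
  case 0 then show ?case by simp
next
  case (Suc d)
  have "X (k + Suc d) - X k = (X (k + d) - X k) - \<gamma> *\<^sub>R V (k + d)" by (simp add: X_Suc)
  also have "norm \<dots> \<le> norm (X (k + d) - X k) + \<gamma> * norm (V (k + d))"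
    using gp by (metis abs_of_pos norm_scaleR norm_triangle_ineq4)
  also have "norm (X (k + d) - X k) \<le> \<gamma> * d * (3/2 * norm v)" using Suc by simp
  also have "norm (V (k + d)) \<le> 3/2 * norm v" using Suc.prems by (intro V_bound) simp
  finally show ?case using gp by (simp add: algebra_simps mult_left_mono)
qed

end


lemma final_ineq:
  fixes a b c d :: real
  assumes "0 \<le> a" "a \<le> c" "0 \<le> b" "b \<le> d"
  shows "(a + b)^2 \<le> 2 * c^2 + 2 * d^2"
proof -
  have "(a+b)^2 \<le> (c+d)^2" using assms by (intro power_mono) auto
  also have "\<dots> \<le> 2 * c^2 + 2 * d^2" using sum_squares_ge_zero[of "c-d" 0]
    by (simp add: power2_eq_square algebra_simps)
  finally show ?thesis .
qed

theorem lemma4: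
  fixes F :: "nat \<Rightarrow> 'a::euclidean_space \<Rightarrow> real"
    and g :: "nat \<Rightarrow> 'a \<Rightarrow> 'a"
    and n :: nat and L \<gamma> :: real
    and \<pi> :: "nat \<Rightarrow> nat \<Rightarrow> nat"
    and x0 :: 'a and s :: nat
  assumes n: "n \<ge> 1"
    and L: "L > 0"
    and smooth: "\<And>i. i \<in> {1..n} \<Longrightarrow> L_smooth L (F i) (g i)"
    and conv_or_bdd: "(\<exists>\<mu>>0. \<forall>i\<in>{1..n}. strongly_convex \<mu> (F i))
                      \<or> bdd_below (range (\<lambda>x. (1 / real n) * (\<Sum>i=1..n. F i x)))"
    and perm: "\<And>s. \<pi> s permutes {1..n}"
    and \<gamma>_pos: "\<gamma> > 0"
    and \<gamma>_le: "\<gamma> \<le> 1 / (3 * L)"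
    and s: "s \<ge> 1"
  shows "(norm ((1 / real n) *\<^sub>R (\<Sum>i=1..n. g i (sarah_x0 g n \<gamma> \<pi> x0 s))
              - (1 / real (n + 1)) *\<^sub>R (\<Sum>t=0..n. sarah_vt g n \<gamma> \<pi> x0 s t)))\<^sup>2
         \<le> 9 * \<gamma>\<^sup>2 * L\<^sup>2 * (norm (sarah_v g n \<gamma> \<pi> x0 s))\<^sup>2
           + 36 * \<gamma>\<^sup>2 * L\<^sup>2 * (real n)\<^sup>2 * (norm (sarah_v g n \<gamma> \<pi> x0 (s - 1)))\<^sup>2"
proof -
  obtain s' where s': "s = Suc s'" using s by (cases s) auto
  have gL: "\<gamma> * L \<le> 1/3" using \<gamma>_le L by (simp add: field_simps)
  have lipg: "norm (g i a - g i b) \<le> L * norm (a - b)" if "i \<in> {1..n}" for i a b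
    using smooth[OF that] unfolding L_smooth_def by blast
  have lip: "norm (g (\<pi> r k) a - g (\<pi> r k) b) \<le> L * norm (a - b)" if "k \<in> {1..n}" for r k a b
    using lipg permutes_in_image[OF perm[of r]] that by blast
  define x' where "x' = sarah_x0 g n \<gamma> \<pi> x0 s'"
  define v' where "v' = sarah_v g n \<gamma> \<pi> x0 s'"
  define p' where "p' = \<pi> s'"
  define xs where "xs = sarah_x0 g n \<gamma> \<pi> x0 s"
  define vs where "vs = sarah_v g n \<gamma> \<pi> x0 s"
  define p where "p = \<pi> s"
  have ep: "sarah_epoch g n \<gamma> \<pi> x0 s' = (x', v')"
    by (simp add: x'_def v'_def sarah_x0_def sarah_v_def)
  have xs_eq: "xs = Xs g n \<gamma> p' x' v' (Suc n)"
    unfolding xs_def sarah_x0_def s' by (simp add: ep st_eq[of g n \<gamma> "\<pi> s'"] p'_def st_Suc)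
  have vs_eq: "vs = TVs g n \<gamma> p' x' v' n"
    unfolding vs_def sarah_v_def s' by (simp add: ep st_eq[of g n \<gamma> "\<pi> s'"] p'_def)
  have vt_eq: "sarah_vt g n \<gamma> \<pi> x0 s t = Vs g n \<gamma> p xs vs t" for t
    by (simp add: sarah_vt_def Vs_def p_def xs_def vs_def)
  have lipp: "\<And>k a b. k \<in> {1..n} \<Longrightarrow> norm (g (p k) a - g (p k) b) \<le> L * norm (a - b)"
    unfolding p_def by (rule lip)
  have lipp': "\<And>k a b. k \<in> {1..n} \<Longrightarrow> norm (g (p' k) a - g (p' k) b) \<le> L * norm (a - b)"
    unfolding p'_def by (rule lip)
  let ?X' = "Xs g n \<gamma> p' x' v'"
  let ?V = "Vs g n \<gamma> p xs vs"
  define A where "A = (1 / real (n + 1)) *\<^sub>R (\<Sum>t=0..n. ?V t) - vs"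
  define B where "B = (1 / real n) *\<^sub>R (\<Sum>i=1..n. g i xs) - vs"
  have BA: "(1 / real n) *\<^sub>R (\<Sum>i=1..n. g i xs) - (1 / real (n + 1)) *\<^sub>R (\<Sum>t=0..n. ?V t) = B - A"
    by (simp add: A_def B_def)
  have A_eq: "A = (1 / real (n + 1)) *\<^sub>R (\<Sum>t=0..n. ?V t - vs)"
    by (simp add: A_def sum_subtractf scaleR_diff_right sum_constant_scaleR)
  have "norm (\<Sum>t=0..n. ?V t - vs) \<le> (\<Sum>t=0..n. 3/2 * (\<gamma> * L) * norm vs)"
    by (rule order_trans[OF norm_sum], rule sum_mono,
        rule V_dev2[where g=g and p=p, OF n L \<gamma>_pos gL lipp]) auto
  then have nA: "norm A \<le> 3/2 * (\<gamma> * L) * norm vs"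
    unfolding A_eq by (simp add: field_simps)
  have bij: "bij_betw p' {1..n} {1..n}" using perm p'_def permutes_imp_bij by blast
  have sumg: "(\<Sum>i=1..n. g i xs) = (\<Sum>k=1..n. g (p' k) xs)"
    using sum.reindex_bij_betw[OF bij, of "\<lambda>i. g i xs"] by simp
  have B_eq: "B = (1 / real n) *\<^sub>R (\<Sum>k=1..n. g (p' k) xs - g (p' k) (?X' k))"
    unfolding B_def sumg by (simp add: vs_eq TV_eq sum_subtractf scaleR_diff_right)
  have "norm (\<Sum>k=1..n. g (p' k) xs - g (p' k) (?X' k)) \<le> (\<Sum>k=1..n. L * (\<gamma> * n * (3/2 * norm v')))"
  proof (rule order_trans[OF norm_sum], rule sum_mono)
    fix k assume k: "k \<in> {1..n}"
    have "norm (g (p' k) xs - g (p' k) (?X' k)) \<le> L * norm (xs - ?X' k)"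
      using lipp'[OF k] by simp
    also have "norm (xs - ?X' k) \<le> \<gamma> * real (Suc n - k) * (3/2 * norm v')"
      using X_dev[where g=g and p=p', OF n L \<gamma>_pos gL lipp', of k "Suc n - k" x' v'] k xs_eq by simp
    also have "\<dots> \<le> \<gamma> * n * (3/2 * norm v')"
      using k \<gamma>_pos by (intro mult_right_mono mult_left_mono) auto
    finally show "norm (g (p' k) xs - g (p' k) (?X' k)) \<le> L * (\<gamma> * n * (3/2 * norm v'))"
      using L by (simp add: mult_left_mono)
  qed
  then have nB: "norm B \<le> 3/2 * (\<gamma> * L * n) * norm v'"
    unfolding B_eq using n by (simp add: field_simps)
  have "(norm (B - A))^2 \<le> (norm A + norm B)^2"
    by (intro power_mono) (auto intro: order_trans[OF norm_triangle_ineq4] simp: add.commute)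
  also have "\<dots> \<le> 2 * (3/2 * (\<gamma> * L) * norm vs)^2 + 2 * (3/2 * (\<gamma> * L * n) * norm v')^2"
    by (rule final_ineq[OF _ nA _ nB]) auto
  also have "\<dots> \<le> 9 * \<gamma>\<^sup>2 * L\<^sup>2 * (norm vs)\<^sup>2 + 36 * \<gamma>\<^sup>2 * L\<^sup>2 * (real n)\<^sup>2 * (norm v')\<^sup>2"
  proof -
    have e1: "2 * (3/2 * (\<gamma> * L) * norm vs)^2 = 9/2 * (\<gamma>\<^sup>2 * L\<^sup>2 * (norm vs)\<^sup>2)"
      by (simp add: power2_eq_square)
    have e2: "2 * (3/2 * (\<gamma> * L * n) * norm v')^2 = 9/2 * (\<gamma>\<^sup>2 * L\<^sup>2 * (real n)\<^sup>2 * (norm v')\<^sup>2)"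
      by (simp add: power2_eq_square)
    have "0 \<le> \<gamma>\<^sup>2 * L\<^sup>2 * (norm vs)\<^sup>2" "0 \<le> \<gamma>\<^sup>2 * L\<^sup>2 * (real n)\<^sup>2 * (norm v')\<^sup>2"
      by simp_all
    then show ?thesis unfolding e1 e2 by linarith
  qed
  finally have fin: "(norm (B - A))\<^sup>2 \<le> 9 * \<gamma>\<^sup>2 * L\<^sup>2 * (norm vs)\<^sup>2 + 36 * \<gamma>\<^sup>2 * L\<^sup>2 * (real n)\<^sup>2 * (norm v')\<^sup>2" .
  have eqB: "(1 / real n) *\<^sub>R (\<Sum>i=1..n. g i (sarah_x0 g n \<gamma> \<pi> x0 s))
              - (1 / real (n + 1)) *\<^sub>R (\<Sum>t=0..n. sarah_vt g n \<gamma> \<pi> x0 s t) = B - A"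
    unfolding vt_eq xs_def[symmetric] by (rule BA)
  have s1: "s - 1 = s'" using s' by simp
  show ?thesis unfolding eqB s1 vs_def[symmetric] v'_def[symmetric] by (rule fin)
qed

end
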